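(* For every integer $k\ge1$, $$\frac{B_k}{k!}=n_{(1,\dots,1)},$$ where $(1,\dots,1)$ is the tuple consisting of $k$ entries equal to $1$.
   Context: $B_k$ are the Bernoulli numbers, defined by $\frac{t}{e^t-1}=\sum_{k\ge0}B_k\frac{t^k}{k!}$ (so $B_1=-\tfrac12$). For a tuple $J=(j_1,\dots,j_s)$ of integers $j_i\ge1$, $m_J:=\prod_{i=1}^{s}\frac{1}{j_i+j_{i+1}+\cdots+j_s+1}\cdot\frac{1}{(j_i-1)!}$, and $n_J:=\sum_{J=J_1\|\cdots\|J_l}(-1)^l m_{J_1}\cdots m_{J_l}$, where the sum runs over all ways of writing $J$ as a concatenation $J_1\|\cdots\|J_l$ of $l\ge1$ nonempty tuples. *)

theory Defs
  imports Complex_Main "HOL-Computational_Algebra.Formal_Power_Series"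
begin

text \<open>Bernoulli numbers via the exponential generating function
  t/(e^t - 1) = sum_k B_k t^k / k!  (so B_1 = -1/2), as a formal power series.\<close>
definition bernoulli_egf :: "real fps" where
  "bernoulli_egf = fps_X / (fps_exp 1 - 1)"

definition bernoulli :: "nat \<Rightarrow> real" where
  "bernoulli k = fact k * fps_nth bernoulli_egf k"

definition mJ :: "nat list \<Rightarrow> real" where
  "mJ J = (\<Prod>i<length J. (1 / (real (sum_list (drop i J)) + 1)) * (1 / fact (J ! i - 1)))"

definition decomps :: "'a list \<Rightarrow> 'a list list set" where
  "decomps J = {Js. concat Js = J \<and> Js \<noteq> [] \<and> (\<forall>X\<in>set Js. X \<noteq> [])}"

definition nJ :: "nat list \<Rightarrow> real" where
  "nJ J = (\<Sum>Js\<in>decomps J. (-1) ^ length Js * prod_list (map mJ Js))"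

end

theory Submission
  imports Defs
begin

definition D :: "'a list \<Rightarrow> 'a list list set" where
  "D J = {Js. concat Js = J \<and> (\<forall>X\<in>set Js. X \<noteq> [])}"

lemma D_Nil: "D [] = {[]}"
  unfolding D_def by auto

lemma D_Cons: assumes "J \<noteq> []"
  shows "D J = (\<Union>s\<in>{1..length J}. Cons (take s J) ` D (drop s J))"
proof
  show "D J \<subseteq> (\<Union>s\<in>{1..length J}. Cons (take s J) ` D (drop s J))"
  proof
    fix Js assume "Js \<in> D J"
    hence c: "concat Js = J" "\<forall>X\<in>set Js. X \<noteq> []" by (auto simp: D_def)
    then obtain X Js' where Js: "Js = X # Js'" using assms by (cases Js) auto
    have X: "X \<noteq> []" using c Js by auto
    have J: "J = X @ concat Js'" using c Js by auto
    have "length X \<in> {1..length J}" using X J by (cases X) auto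
    moreover have "take (length X) J = X" "drop (length X) J = concat Js'" using J by auto
    moreover have "Js' \<in> D (concat Js')" using c Js by (auto simp: D_def)
    ultimately show "Js \<in> (\<Union>s\<in>{1..length J}. Cons (take s J) ` D (drop s J))"
      using Js by (metis (no_types, lifting) UN_iff image_eqI)
  qed
next
  show "(\<Union>s\<in>{1..length J}. Cons (take s J) ` D (drop s J)) \<subseteq> D J"
    by (auto simp: D_def)
qed

lemma D_finite: "finite (D J)"
proof (induction "length J" arbitrary: J rule: less_induct)
  case less
  show ?case
  proof (cases "J = []")
    case True thus ?thesis by (simp add: D_Nil)
  next
    case False
    have "\<forall>s\<in>{1..length J}. finite (D (drop s J))"
      using less False by auto
    thus ?thesis by (simp add: D_Cons[OF False])
  qed
qed

definition g :: "nat list \<Rightarrow> real" where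
  "g J = (\<Sum>Js\<in>D J. (-1) ^ length Js * prod_list (map mJ Js))"

lemma g_Nil: "g [] = 1" by (simp add: g_def D_Nil)

lemma g_Cons: assumes "J \<noteq> []"
  shows "g J = (\<Sum>s\<in>{1..length J}. - mJ (take s J) * g (drop s J))"
proof -
  have disj: "\<forall>s\<in>{1..length J}. \<forall>t\<in>{1..length J}. s \<noteq> t \<longrightarrow> Cons (take s J) ` D (drop s J) \<inter> Cons (take t J) ` D (drop t J) = {}"
  proof (intro ballI impI)
    fix s t assume st: "s \<in> {1..length J}" "t \<in> {1..length J}" "s \<noteq> t"
    hence "take s J \<noteq> take t J" by (metis atLeastAtMost_iff length_take min.absorb2)
    thus "Cons (take s J) ` D (drop s J) \<inter> Cons (take t J) ` D (drop t J) = {}" by auto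
  qed
  have "g J = (\<Sum>s\<in>{1..length J}. \<Sum>Js\<in>Cons (take s J) ` D (drop s J). (-1) ^ length Js * prod_list (map mJ Js))"
    unfolding g_def D_Cons[OF assms]
    by (rule sum.UNION_disjoint) (auto simp: D_finite disj)
  also have "\<dots> = (\<Sum>s\<in>{1..length J}. - mJ (take s J) * g (drop s J))"
    by (rule sum.cong[OF refl], subst sum.reindex) (auto simp: g_def sum_distrib_left mult_ac intro!: sum.cong)
  finally show ?thesis .
qed

lemma nJ_g: "J \<noteq> [] \<Longrightarrow> nJ J = g J"
proof -
  assume "J \<noteq> []"
  hence "decomps J = D J" unfolding decomps_def D_def by auto
  thus ?thesis by (simp add: nJ_def g_def)
qed

lemma mJ_rep: "mJ (replicate s 1) = 1 / fact (Suc s)"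
proof -
  have "mJ (replicate s 1) = (\<Prod>i<s. 1 / (real (s - i) + 1))"
    unfolding mJ_def by (intro prod.cong) (auto simp: sum_list_replicate)
  also have "\<dots> = 1 / (\<Prod>i<s. real (s - i) + 1)"
    by (simp add: prod_dividef)
  also have "(\<Prod>i<s. real (s - i) + 1) = (\<Prod>j\<in>{1..s}. real j + 1)"
    by (rule prod.reindex_bij_witness[of _ "\<lambda>j. s - j" "\<lambda>i. s - i"]) auto
  also have "\<dots> = fact (Suc s)"
    by (induction s) (auto simp: prod.nat_ivl_Suc' algebra_simps)
  finally show ?thesis .
qed

definition f :: "nat \<Rightarrow> real" where "f k = g (replicate k 1)"

lemma f0: "f 0 = 1" by (simp add: f_def g_Nil)

lemma f_rec: assumes "n \<ge> 1"
  shows "f n = - (\<Sum>i<n. f i / fact (n - i + 1))"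
proof -
  have "f n = (\<Sum>s\<in>{1..n}. - (1 / fact (Suc s)) * f (n - s))"
    unfolding f_def using assms
    by (subst g_Cons) (auto simp: mJ_rep[simplified] fact_Suc intro!: sum.cong)
  also have "\<dots> = (\<Sum>i<n. - (1 / fact (Suc (n - i))) * f i)"
    by (rule sum.reindex_bij_witness[of _ "\<lambda>i. n - i" "\<lambda>s. n - s"]) auto
  also have "\<dots> = - (\<Sum>i<n. f i / fact (n - i + 1))"
    by (simp add: sum_negf[symmetric])
  finally show ?thesis .
qed

lemma b_mult: "bernoulli_egf * (fps_exp 1 - 1) = fps_X"
proof -
  have ne: "fps_exp (1::real) - 1 \<noteq> 0"
  proof
    assume "fps_exp (1::real) - 1 = 0"
    hence "fps_nth (fps_exp (1::real) - 1) 1 = 0" by simp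
    thus False by simp
  qed
  have "subdegree (fps_exp (1::real) - 1) \<le> 1"
    by (rule subdegree_leI) simp
  hence "subdegree (fps_exp (1::real) - 1) \<le> subdegree (fps_X :: real fps)" by simp
  thus ?thesis unfolding bernoulli_egf_def by (rule fps_times_divide_eq[OF ne])
qed

lemma b_coeff: "(\<Sum>i\<le>n. fps_nth bernoulli_egf i / fact (n + 1 - i)) = (if n = 0 then 1 else 0)"
proof -
  have "fps_nth (bernoulli_egf * (fps_exp 1 - 1)) (n+1) = (if n = 0 then 1 else 0)"
    by (simp add: b_mult fps_X_def)
  moreover have "fps_nth (bernoulli_egf * (fps_exp 1 - 1)) (n+1) =
      (\<Sum>i\<le>n+1. fps_nth bernoulli_egf i * fps_nth (fps_exp 1 - 1) (n + 1 - i))"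
    by (simp add: fps_mult_nth atLeast0AtMost)
  moreover have "\<dots> = (\<Sum>i\<le>n. fps_nth bernoulli_egf i / fact (n + 1 - i))"
    by (simp add: Suc_diff_le divide_inverse)
  ultimately show ?thesis by simp
qed

lemma f_b: "f n = fps_nth bernoulli_egf n"
proof (induction n rule: less_induct)
  case (less n)
  show ?case
  proof (cases "n = 0")
    case True thus ?thesis using b_coeff[of 0] by (simp add: f0)
  next
    case False
    have "(\<Sum>i\<le>n. fps_nth bernoulli_egf i / fact (n + 1 - i)) = 0" using b_coeff[of n] False by simp
    hence "fps_nth bernoulli_egf n = - (\<Sum>i<n. fps_nth bernoulli_egf i / fact (Suc n - i))"
      by (simp add: lessThan_Suc_atMost[symmetric] add.commute eq_neg_iff_add_eq_0 del: fact_Suc)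
    also have "\<dots> = - (\<Sum>i<n. fps_nth bernoulli_egf i / fact (n - i + 1))"
      by (intro arg_cong[where f=uminus] sum.cong refl) (simp add: Suc_diff_le del: fact_Suc)
    also have "\<dots> = - (\<Sum>i<n. f i / fact (n - i + 1))"
      using less by simp
    also have "\<dots> = f n" using f_rec[of n] False by simp
    finally show ?thesis by simp
  qed
qed

theorem mainTheorem8:
  fixes k :: nat
  assumes "k \<ge> 1"
  shows "bernoulli k / fact k = nJ (replicate k 1)"
proof -
  have "nJ (replicate k 1) = f k" unfolding f_def using assms by (simp add: nJ_g)
  thus ?thesis by (simp add: bernoulli_def f_b)
qed

end
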